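(* Let $\mathcal{M}=\langle\mathbf{U},\mathbf{V},\mathcal{F},P(\mathbf{U})\rangle$ and $\mathcal{M}'=\langle\mathbf{U}',\mathbf{V},\mathcal{F}',P(\mathbf{U}')\rangle$ be two SCMs over the same endogenous variables $\mathbf{V}$ and with the same functional counterfactual set $\mathbf{F}$. Then $P^{\mathcal{M}}(\mathbf{F}=\mathbf{f})=P^{\mathcal{M}'}(\mathbf{F}=\mathbf{f})$ for all $\mathbf{f}\in\mathcal{D}_{\mathbf{F}}$ if and only if $\mathcal{L}_3(\mathcal{M})=\mathcal{L}_3(\mathcal{M}')$.
   Context: An SCM $\mathcal{M}=\langle \mathbf{U},\mathbf{V},\mathcal{F},P(\mathbf{U})\rangle$ has exogenous variables $\mathbf{U}$, endogenous variables $\mathbf{V}$, functions $f_V$ mapping exogenous parents $\mathbf{U}_V$ and endogenous parents $\mathbf{Pa}_V\subseteq\mathbf{V}\setminus\{V\}$ to $V$, and a distribution $P(\mathbf{U})$; SCMs are recursive with finite discrete endogenous domains; $\mathcal{D}_{\mathbf{X}}$ is the domain of $\mathbf{X}$. $\mathbf{Y}_{\mathbf{x}}(\mathbf{u})$ is the value of $\mathbf{Y}$ under $\mathbf{u}$ in the submodel with the functions of $\mathbf{X}$ replaced by constants $\mathbf{x}$; $P^{\mathcal{M}}(\mathbf{y}_{1[\mathbf{x}_1]},\mathbf{y}_{2[\mathbf{x}_2]},\dots)=\int\mathbf{1}[\mathbf{Y}_{1[\mathbf{x}_1]}(\mathbf{u})=\mathbf{y}_1,\mathbf{Y}_{2[\mathbf{x}_2]}(\mathbf{u})=\mathbf{y}_2,\dots]dP(\mathbf{u})$,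 and $\mathcal{L}_3(\mathcal{M})$ is the set of all such counterfactual distributions. The functional counterfactual set of $\mathcal{M}$ is $\mathbf{F}=\{V_{i[\mathbf{pa}^{(j)}_{V_i}]}:V_i\in\mathbf{V},\ \mathbf{pa}^{(j)}_{V_i}\in\mathcal{D}_{\mathbf{Pa}_{V_i}}\}$ (each variable intervened on every instantiation of its parents; if $\mathbf{Pa}_{V_i}=\emptyset$, $V_i$ itself is in $\mathbf{F}$), with instantiations $\mathbf{f}\in\mathcal{D}_{\mathbf{F}}$; $P^{\mathcal{M}}(\mathbf{F}=\mathbf{f})$ is the corresponding joint counterfactual probability. *)

theory Defs
  imports "HOL-Probability.Probability"
begin

text \<open>Each endogenous variable v has a (finite, discrete) domain D v and a parent set pa v;
  both are shared parameters (same V, same functional counterfactual set F).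
  The exogenous variables are modelled by a probability space on a type 'u;
  f_V may depend on the exogenous state u (this covers U_V \<subseteq> U) and on the parents.\<close>

record ('u, 'v, 'x) scm =
  exo :: "'u measure"
  fn  :: "'v \<Rightarrow> 'u \<Rightarrow> ('v \<Rightarrow> 'x) \<Rightarrow> 'x"

definition is_SCM :: "('v \<Rightarrow> 'x set) \<Rightarrow> ('v \<Rightarrow> 'v set) \<Rightarrow> ('u, 'v, 'x) scm \<Rightarrow> bool" where
  "is_SCM D pa S \<longleftrightarrow>
     prob_space (exo S) \<and>
     wf {(w, v). w \<in> pa v} \<comment> \<open>recursive (acyclic parent relation)\<close> \<and>
     (\<forall>v u s s'. (\<forall>w\<in>pa v. s w = s' w) \<longrightarrow> fn S v u s = fn S v u s') \<and>
     (\<forall>v u s. (\<forall>w\<in>pa v. s w \<in> D w) \<longrightarrow> fn S v u s \<in> D v) \<and>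
     (\<forall>v s. (\<forall>w\<in>pa v. s w \<in> D w) \<longrightarrow>
        (\<lambda>u. fn S v u s) \<in> measurable (exo S) (count_space UNIV))"

text \<open>Solution of the submodel M_x under exogenous state u; the intervention x is a
  partial map (dom x = X, values x).\<close>
definition sol :: "('u, 'v, 'x) scm \<Rightarrow> ('v \<rightharpoonup> 'x) \<Rightarrow> 'u \<Rightarrow> 'v \<Rightarrow> 'x" where
  "sol S x u = (THE s. \<forall>v. s v = (case x v of Some c \<Rightarrow> c | None \<Rightarrow> fn S v u s))"

text \<open>A counterfactual query y_{1[x_1]}, y_{2[x_2]}, ...: a list of pairs (x_i, y_i)
  of partial assignments (intervention x_i, observed Y_i = dom y_i with values y_i).\<close>
type_synonym ('v, 'x) cf_query = "(('v \<rightharpoonup> 'x) \<times> ('v \<rightharpoonup> 'x)) list"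

definition valid_query :: "('v \<Rightarrow> 'x set) \<Rightarrow> ('v, 'x) cf_query \<Rightarrow> bool" where
  "valid_query D q \<longleftrightarrow>
     (\<forall>(x, y) \<in> set q. (\<forall>v \<in> dom x. the (x v) \<in> D v) \<and> (\<forall>v \<in> dom y. the (y v) \<in> D v))"

definition cf_prob :: "('u, 'v, 'x) scm \<Rightarrow> ('v, 'x) cf_query \<Rightarrow> real" where
  "cf_prob S q = measure (exo S)
     {u \<in> space (exo S). \<forall>(x, y) \<in> set q. \<forall>v \<in> dom y. sol S x u v = the (y v)}"

text \<open>L_3(M): the set of all counterfactual distributions, i.e. the graph of the map
  from (valid) counterfactual queries to their probabilities.\<close>
definition L3 :: "('v \<Rightarrow> 'x set) \<Rightarrow> ('u, 'v, 'x) scm \<Rightarrow> (('v, 'x) cf_query \<times> real) set" where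
  "L3 D S = {(q, cf_prob S q) | q. valid_query D q}"

text \<open>Functional counterfactual set F: index set of the counterfactual variables
  V_[pa] for every v and every instantiation pa \<in> D_{Pa_v} (extensional functions on pa v).\<close>
definition F_index :: "('v \<Rightarrow> 'x set) \<Rightarrow> ('v \<Rightarrow> 'v set) \<Rightarrow> ('v \<times> ('v \<Rightarrow> 'x)) set" where
  "F_index D pa = {(v, p). p \<in> PiE (pa v) D}"

definition F_dom :: "('v \<Rightarrow> 'x set) \<Rightarrow> ('v \<Rightarrow> 'v set) \<Rightarrow> ('v \<times> ('v \<Rightarrow> 'x) \<Rightarrow> 'x) set" where
  "F_dom D pa = PiE (F_index D pa) (\<lambda>(v, p). D v)"

definition par_interv :: "('v \<Rightarrow> 'v set) \<Rightarrow> 'v \<Rightarrow> ('v \<Rightarrow> 'x) \<Rightarrow> ('v \<rightharpoonup> 'x)" where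
  "par_interv pa v p = (\<lambda>w. if w \<in> pa v then Some (p w) else None)"

definition F_prob :: "('v \<Rightarrow> 'x set) \<Rightarrow> ('v \<Rightarrow> 'v set) \<Rightarrow> ('u, 'v, 'x) scm
                      \<Rightarrow> ('v \<times> ('v \<Rightarrow> 'x) \<Rightarrow> 'x) \<Rightarrow> real" where
  "F_prob D pa S f = measure (exo S)
     {u \<in> space (exo S). \<forall>(v, p) \<in> F_index D pa. sol S (par_interv pa v p) u v = f (v, p)}"

end

theory Submission
  imports Defs
begin

definition Fsol :: "('v \<Rightarrow> 'v set) \<Rightarrow> ('v \<times> ('v \<Rightarrow> 'x) \<Rightarrow> 'x) \<Rightarrow> ('v \<rightharpoonup> 'x) \<Rightarrow> 'v \<Rightarrow> 'x" where
  "Fsol pa g x = (THE s. \<forall>v. s v = (case x v of Some c \<Rightarrow> c | None \<Rightarrow> g (v, restrict s (pa v))))"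

definition phi :: "('v \<Rightarrow> 'x set) \<Rightarrow> ('v \<Rightarrow> 'v set) \<Rightarrow> ('u, 'v, 'x) scm \<Rightarrow> 'u \<Rightarrow> ('v \<times> ('v \<Rightarrow> 'x) \<Rightarrow> 'x)" where
  "phi D pa S u = (\<lambda>vp \<in> F_index D pa. fn S (fst vp) u (snd vp))"

lemma fix_unique:
  assumes wf: "wf {(w, v). w \<in> pa v}"
    and loc: "\<And>v s t. (\<forall>w\<in>pa v. s w = t w) \<Longrightarrow> H s v = H t v"
    and s: "\<forall>v. s v = H s v" and t: "\<forall>v. t v = H t v"
  shows "s = t"
proof
  fix v
  show "s v = t v"
    using wf
  proof (induction v rule: wf_induct_rule)
    case (less v)
    then have "\<forall>w\<in>pa v. s w = t w" by auto
    then have "H s v = H t v" by (rule loc)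
    then show ?case using s t by metis
  qed
qed

lemma fix_exists:
  assumes wf: "wf {(w, v). w \<in> pa v}"
    and loc: "\<And>v s t. (\<forall>w\<in>pa v. s w = t w) \<Longrightarrow> H s v = H t v"
  shows "\<exists>s. \<forall>v. s v = H s v"
proof -
  have "adm_wf {(w, v). w \<in> pa v} H"
    unfolding adm_wf_def using loc by auto
  then have "wfrec {(w, v). w \<in> pa v} H = H (wfrec {(w, v). w \<in> pa v} H)"
    using wfrec_fixpoint wf by blast
  then show ?thesis by metis
qed

lemma sol_eq:
  assumes "is_SCM D pa S"
  shows "sol S x u v = (case x v of Some c \<Rightarrow> c | None \<Rightarrow> fn S v u (sol S x u))"
proof -
  let ?H = "\<lambda>s v. (case x v of Some c \<Rightarrow> c | None \<Rightarrow> fn S v u s)"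
  have wf: "wf {(w, v). w \<in> pa v}" using assms unfolding is_SCM_def by blast
  have loc: "\<And>v s t. (\<forall>w\<in>pa v. s w = t w) \<Longrightarrow> ?H s v = ?H t v"
    using assms unfolding is_SCM_def by (auto split: option.split)
  obtain s where s: "\<forall>v. s v = ?H s v" using fix_exists[where H="?H", OF wf loc] by blast
  have "sol S x u = s"
    unfolding sol_def
  proof (rule the_equality)
    show "\<forall>v. s v = ?H s v" by (rule s)
  next
    fix t assume "\<forall>v. t v = ?H t v"
    then show "t = s" using fix_unique[where H="?H", OF wf loc] s by blast
  qed
  then show ?thesis using s by metis
qed

lemma sol_in_D:
  assumes "is_SCM D pa S" "\<forall>v\<in>dom x. the (x v) \<in> D v"
  shows "sol S x u v \<in> D v"
proof -
  have wf: "wf {(w, v). w \<in> pa v}" using assms unfolding is_SCM_def by blast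
  show ?thesis using wf
  proof (induction v rule: wf_induct_rule)
    case (less v)
    show ?case
    proof (cases "x v")
      case None
      have "\<forall>w\<in>pa v. sol S x u w \<in> D w" using less by auto
      then have "fn S v u (sol S x u) \<in> D v" using assms(1) unfolding is_SCM_def by blast
      then show ?thesis using None sol_eq[OF assms(1), of x u v] by simp
    next
      case (Some c)
      then show ?thesis using sol_eq[OF assms(1), of x u v] assms(2) by (auto simp: dom_def)
    qed
  qed
qed

lemma Fsol_eq:
  assumes wf: "wf {(w, v). w \<in> pa v}"
    and s: "\<forall>v. s v = (case x v of Some c \<Rightarrow> c | None \<Rightarrow> g (v, restrict s (pa v)))"
  shows "Fsol pa g x = s"
proof -
  let ?H = "\<lambda>s v. (case x v of Some c \<Rightarrow> c | None \<Rightarrow> g (v, restrict s (pa v)))"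
  have loc: "\<And>v s t. (\<forall>w\<in>pa v. s w = t w) \<Longrightarrow> ?H s v = ?H t v"
    by (metis restrict_ext)
  show ?thesis unfolding Fsol_def
  proof (rule the_equality)
    show "\<forall>v. s v = ?H s v" by (rule s)
  next
    fix t assume "\<forall>v. t v = ?H t v"
    then show "t = s" using fix_unique[where H="?H", OF wf loc] s by blast
  qed
qed

lemma sol_Fsol:
  assumes S: "is_SCM D pa S" and x: "\<forall>v\<in>dom x. the (x v) \<in> D v"
  shows "sol S x u = Fsol pa (phi D pa S u) x"
proof -
  have wf: "wf {(w, v). w \<in> pa v}" using S unfolding is_SCM_def by blast
  have loc: "\<And>v s t. (\<forall>w\<in>pa v. s w = t w) \<Longrightarrow> fn S v u s = fn S v u t"
    using S unfolding is_SCM_def by blast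
  have "\<forall>v. sol S x u v = (case x v of Some c \<Rightarrow> c | None \<Rightarrow> phi D pa S u (v, restrict (sol S x u) (pa v)))"
  proof
    fix v
    have "restrict (sol S x u) (pa v) \<in> PiE (pa v) D"
      using sol_in_D[OF S x] by auto
    then have "phi D pa S u (v, restrict (sol S x u) (pa v)) = fn S v u (restrict (sol S x u) (pa v))"
      by (simp add: phi_def F_index_def)
    also have "\<dots> = fn S v u (sol S x u)" by (rule loc) auto
    finally show "sol S x u v = (case x v of Some c \<Rightarrow> c | None \<Rightarrow> phi D pa S u (v, restrict (sol S x u) (pa v)))"
      using sol_eq[OF S, of x u v] by (simp split: option.split)
  qed
  then show ?thesis using Fsol_eq[OF wf] by metis
qed

lemma sol_par:
  assumes S: "is_SCM D pa S"
  shows "sol S (par_interv pa v p) u v = fn S v u p"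
proof -
  have wf: "wf {(w, v). w \<in> pa v}" using S unfolding is_SCM_def by blast
  have "v \<notin> pa v" using wf by (metis (mono_tags, lifting) case_prodI mem_Collect_eq wf_not_refl)
  then have "sol S (par_interv pa v p) u v = fn S v u (sol S (par_interv pa v p) u)"
    using sol_eq[OF S, of "par_interv pa v p" u v] by (simp add: par_interv_def)
  also have "\<dots> = fn S v u p"
  proof -
    have "\<forall>w\<in>pa v. sol S (par_interv pa v p) u w = p w"
      using sol_eq[OF S, of "par_interv pa v p" u] by (simp add: par_interv_def)
    then show ?thesis using S unfolding is_SCM_def by blast
  qed
  finally show ?thesis .
qed

lemma F_index_finite:
  fixes D :: "'v::finite \<Rightarrow> 'x set"
  assumes "\<And>v. finite (D v)"
  shows "finite (F_index D pa)"
proof -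
  have "F_index D pa = Sigma UNIV (\<lambda>v. PiE (pa v) D)"
    unfolding F_index_def by auto
  then show ?thesis using assms by (simp add: finite_PiE)
qed

lemma F_dom_finite:
  fixes D :: "'v::finite \<Rightarrow> 'x set"
  assumes "\<And>v. finite (D v)"
  shows "finite (F_dom D pa)"
  unfolding F_dom_def using F_index_finite[OF assms] assms
  by (intro finite_PiE) auto

lemma phi_in:
  assumes S: "is_SCM D pa S"
  shows "phi D pa S u \<in> F_dom D pa"
  using S unfolding F_dom_def phi_def F_index_def is_SCM_def by (auto simp: PiE_iff)

lemma F_prob_phi:
  assumes S: "is_SCM D pa S" and g: "g \<in> F_dom D pa"
  shows "F_prob D pa S g = measure (exo S) {u \<in> space (exo S). phi D pa S u = g}"
proof -
  have "{u \<in> space (exo S). \<forall>(v, p) \<in> F_index D pa. sol S (par_interv pa v p) u v = g (v, p)}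
     = {u \<in> space (exo S). phi D pa S u = g}"
  proof (intro Collect_cong conj_cong refl)
    fix u
    have e: "phi D pa S u \<in> extensional (F_index D pa)" "g \<in> extensional (F_index D pa)"
      using g unfolding phi_def F_dom_def by (auto simp: PiE_iff)
    show "(\<forall>(v, p) \<in> F_index D pa. sol S (par_interv pa v p) u v = g (v, p)) \<longleftrightarrow> phi D pa S u = g"
    proof
      assume "\<forall>(v, p) \<in> F_index D pa. sol S (par_interv pa v p) u v = g (v, p)"
      then have "\<forall>vp\<in>F_index D pa. phi D pa S u vp = g vp"
        by (auto simp: phi_def sol_par[OF S])
      then show "phi D pa S u = g" using e extensionalityI by blast
    next
      assume "phi D pa S u = g"
      then show "\<forall>(v, p) \<in> F_index D pa. sol S (par_interv pa v p) u v = g (v, p)"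
        by (auto simp: phi_def sol_par[OF S])
    qed
  qed
  then show ?thesis unfolding F_prob_def by simp
qed

lemma fiber_sets:
  fixes D :: "'v::finite \<Rightarrow> 'x set"
  assumes fin: "\<And>v. finite (D v)" and S: "is_SCM D pa S" and g: "g \<in> F_dom D pa"
  shows "{u \<in> space (exo S). phi D pa S u = g} \<in> sets (exo S)"
proof -
  have eq: "{u \<in> space (exo S). phi D pa S u = g}
     = {u \<in> space (exo S). \<forall>vp\<in>F_index D pa. fn S (fst vp) u (snd vp) = g vp}"
  proof (intro Collect_cong conj_cong refl)
    fix u
    have e: "phi D pa S u \<in> extensional (F_index D pa)" "g \<in> extensional (F_index D pa)"
      using g unfolding phi_def F_dom_def by (auto simp: PiE_iff)
    show "phi D pa S u = g \<longleftrightarrow> (\<forall>vp\<in>F_index D pa. fn S (fst vp) u (snd vp) = g vp)"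
      using e extensionalityI[of "phi D pa S u" "F_index D pa" g] by (auto simp: phi_def)
  qed
  have "{u \<in> space (exo S). \<forall>vp\<in>F_index D pa. fn S (fst vp) u (snd vp) = g vp} \<in> sets (exo S)"
  proof (rule sets.sets_Collect_finite_All)
    show "finite (F_index D pa)" using F_index_finite[OF fin] .
  next
    fix vp assume vp: "vp \<in> F_index D pa"
    then have "\<forall>w\<in>pa (fst vp). snd vp w \<in> D w" unfolding F_index_def by auto
    then have m: "(\<lambda>u. fn S (fst vp) u (snd vp)) \<in> measurable (exo S) (count_space UNIV)"
      using S unfolding is_SCM_def by blast
    have "(\<lambda>u. fn S (fst vp) u (snd vp)) -` {g vp} \<inter> space (exo S) \<in> sets (exo S)"
      using measurable_sets[OF m] by simp
    moreover have "(\<lambda>u. fn S (fst vp) u (snd vp)) -` {g vp} \<inter> space (exo S)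
       = {u \<in> space (exo S). fn S (fst vp) u (snd vp) = g vp}" by auto
    ultimately show "{u \<in> space (exo S). fn S (fst vp) u (snd vp) = g vp} \<in> sets (exo S)" by simp
  qed
  then show ?thesis using eq by simp
qed

definition Pq :: "('v \<Rightarrow> 'v set) \<Rightarrow> ('v, 'x) cf_query \<Rightarrow> ('v \<times> ('v \<Rightarrow> 'x) \<Rightarrow> 'x) \<Rightarrow> bool" where
  "Pq pa q g \<longleftrightarrow> (\<forall>(x, y) \<in> set q. \<forall>v \<in> dom y. Fsol pa g x v = the (y v))"

lemma cf_sum:
  fixes D :: "'v::finite \<Rightarrow> 'x set"
  assumes fin: "\<And>v. finite (D v)" and S: "is_SCM D pa S" and q: "valid_query D q"
  shows "cf_prob S q = (\<Sum>g\<in>{g \<in> F_dom D pa. Pq pa q g}. F_prob D pa S g)"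
proof -
  interpret prob_space "exo S" using S unfolding is_SCM_def by blast
  let ?A = "\<lambda>g. {u \<in> space (exo S). phi D pa S u = g}"
  let ?G = "{g \<in> F_dom D pa. Pq pa q g}"
  have "{u \<in> space (exo S). \<forall>(x, y) \<in> set q. \<forall>v \<in> dom y. sol S x u v = the (y v)}
      = {u \<in> space (exo S). Pq pa q (phi D pa S u)}"
  proof (intro Collect_cong conj_cong refl)
    fix u
    have "\<And>x y. (x, y) \<in> set q \<Longrightarrow> sol S x u = Fsol pa (phi D pa S u) x"
      using q unfolding valid_query_def by (intro sol_Fsol[OF S]) (fastforce simp: dom_def)
    then show "(\<forall>(x, y) \<in> set q. \<forall>v \<in> dom y. sol S x u v = the (y v)) = Pq pa q (phi D pa S u)"
      unfolding Pq_def by (intro ball_cong refl) (auto split: prod.split; metis domI option.sel)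
  qed
  also have "\<dots> = (\<Union>g\<in>?G. ?A g)"
    using phi_in[OF S] by auto
  finally have "cf_prob S q = measure (exo S) (\<Union>g\<in>?G. ?A g)"
    unfolding cf_prob_def by simp
  also have "\<dots> = (\<Sum>g\<in>?G. measure (exo S) (?A g))"
    by (rule finite_measure_finite_Union)
      (use F_dom_finite[of D pa, OF fin] fiber_sets[OF fin S] in \<open>auto simp: disjoint_family_on_def\<close>)
  also have "\<dots> = (\<Sum>g\<in>?G. F_prob D pa S g)"
    using F_prob_phi[OF S] by simp
  finally show ?thesis .
qed

definition Fq :: "('v \<Rightarrow> 'v set) \<Rightarrow> ('v \<times> ('v \<Rightarrow> 'x) \<Rightarrow> 'x) \<Rightarrow> ('v \<times> ('v \<Rightarrow> 'x)) list \<Rightarrow> ('v, 'x) cf_query" where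
  "Fq pa f xs = map (\<lambda>(v, p). (par_interv pa v p, [v \<mapsto> f (v, p)])) xs"

lemma F_prob_cf:
  assumes "set xs = F_index D pa"
  shows "F_prob D pa S f = cf_prob S (Fq pa f xs)"
proof -
  have "{u \<in> space (exo S). \<forall>(v, p) \<in> F_index D pa. sol S (par_interv pa v p) u v = f (v, p)}
      = {u \<in> space (exo S). \<forall>(x, y) \<in> set (Fq pa f xs). \<forall>v \<in> dom y. sol S x u v = the (y v)}"
    unfolding Fq_def assms[symmetric] by (auto split: if_splits)
  then show ?thesis unfolding F_prob_def cf_prob_def by simp
qed

lemma Fq_valid:
  assumes "set xs = F_index D pa" "f \<in> F_dom D pa"
  shows "valid_query D (Fq pa f xs)"
  using assms unfolding valid_query_def Fq_def F_dom_def F_index_def par_interv_def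
  by (auto simp: PiE_iff split: if_splits)

theorem lemma2:
  fixes D :: "'v::finite \<Rightarrow> 'x set"
    and pa :: "'v \<Rightarrow> 'v set"
    and M :: "('u, 'v, 'x) scm"
    and M' :: "('u', 'v, 'x) scm"
  assumes "\<And>v. finite (D v)"
    and "\<And>v. D v \<noteq> {}"
    and "is_SCM D pa M"
    and "is_SCM D pa M'"
  shows "(\<forall>f \<in> F_dom D pa. F_prob D pa M f = F_prob D pa M' f) \<longleftrightarrow> L3 D M = L3 D M'"
proof
  assume H: "\<forall>f \<in> F_dom D pa. F_prob D pa M f = F_prob D pa M' f"
  have eq: "cf_prob M q = cf_prob M' q" if q: "valid_query D q" for q
    using cf_sum[OF assms(1) assms(3) q] cf_sum[OF assms(1) assms(4) q] H
    by (metis (no_types, lifting) mem_Collect_eq sum.cong)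
  show "L3 D M = L3 D M'"
    unfolding L3_def using eq by fastforce
next
  assume L: "L3 D M = L3 D M'"
  show "\<forall>f \<in> F_dom D pa. F_prob D pa M f = F_prob D pa M' f"
  proof
    fix f assume f: "f \<in> F_dom D pa"
    obtain xs where xs: "set xs = F_index D pa"
      using finite_list[OF F_index_finite[of D pa, OF assms(1)]] by blast
    have v: "valid_query D (Fq pa f xs)" using Fq_valid[OF xs f] .
    then have "(Fq pa f xs, cf_prob M (Fq pa f xs)) \<in> L3 D M'"
      using L unfolding L3_def by auto
    then have "cf_prob M (Fq pa f xs) = cf_prob M' (Fq pa f xs)"
      unfolding L3_def by auto
    then show "F_prob D pa M f = F_prob D pa M' f"
      using F_prob_cf[OF xs] by metis
  qed
qed

end
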